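(* In the setting of the preceding lemma (series inversion), assume in addition that $I=[-r,r]$ for some $r>0$, $x_*\in I$, and $$\tfrac{(2n+2)\|a_{2n+2}\|_{L^\infty(I)}}{(2n+1)a_{2n+1}}(r+|x_*|)<1,\qquad \tfrac{\|a_{2n+2}\|_{L^\infty(I)}}{a_{2n+1}R_n}(r+|x_*|)<\tfrac14.$$ Then for all $x\in I$, $$\Bigl|(x-x_* )-\Bigl(\tfrac{y(x)-y_*}{a_{2n+1}}\Bigr)^{\frac1{2n+1}}\Bigr|\le\tfrac{4M_n\|a_{2n+2}\|_{L^\infty(I)}}{a_{2n+1}R_n}\Bigl|\tfrac{y(x)-y_*}{a_{2n+1}}\Bigr|^{\frac2{2n+1}},$$ and the range of $y$ contains the interval $\{|y-y_*|\le\frac{a_{2n+1}(r-|x_*|)^{2n+1}}{2n+2}\}$.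
   Context: Setting: $n\ge1$, $y\in C^{2n+1,1}(I)$ with $y(x)=y_*+a_{2n+1}(x-x_* )^{2n+1}+a_{2n+2}(x)(x-x_* )^{2n+2}$ on $I$, $a_{2n+1}>0$ constant, $a_{2n+2}:I\to\mathbb R$ continuous; $s^{1/(2n+1)}$ is the real odd root. The sequence $c_j^n$: $c_0^n=1$, $c_m^n=\sum_{\ell_1+\dots+\ell_{2n+2}=m-1}\prod c^n_{\ell_i}-\tfrac1{2n+1}\sum_{j_1+\dots+j_{2n+1}=m,\ 0\le j_i\le m-1}\prod c^n_{j_i}$. $\bar y_n(z):=\sum_{j\ge0}\frac{(-1)^j}{(2n+1)^j}c_j^nz^j$, with radius of convergence $R_n:=\frac{2n+1}{\limsup_j|c_j^n|^{1/j}}>0$, and $M_n:=\max_{|z|=3R_n/4}|\bar y_n(z)|$ ($z\in\mathbb C$). *)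

theory Defs
  imports "HOL-Analysis.Analysis" "HOL-Library.Liminf_Limsup"
begin

text \<open>One step of the recursion for the sequence c_j^n: given the list
  [c_0, ..., c_(m-1)] (of length m), compute c_m.\<close>
definition cnext :: "nat \<Rightarrow> real list \<Rightarrow> real" where
  "cnext n cs = (let m = length cs in
     if m = 0 then 1 else
       (\<Sum>f\<in>{f \<in> {..<2*n+2} \<rightarrow>\<^sub>E {..<m}. sum f {..<2*n+2} = m - 1}.
           \<Prod>i<2*n+2. cs ! f i)
       - 1 / real (2*n+1) *
       (\<Sum>f\<in>{f \<in> {..<2*n+1} \<rightarrow>\<^sub>E {..<m}. sum f {..<2*n+1} = m}.
           \<Prod>i<2*n+1. cs ! f i))"

primrec clist :: "nat \<Rightarrow> nat \<Rightarrow> real list" where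
  "clist n 0 = []"
| "clist n (Suc m) = clist n m @ [cnext n (clist n m)]"

definition c :: "nat \<Rightarrow> nat \<Rightarrow> real" where
  "c n j = clist n (Suc j) ! j"

definition ybar :: "nat \<Rightarrow> complex \<Rightarrow> complex" where
  "ybar n z = (\<Sum>j. complex_of_real ((-1)^j / real (2*n+1)^j * c n j) * z^j)"

definition R :: "nat \<Rightarrow> real" where
  "R n = real_of_ereal (ereal (real (2*n+1)) / limsup (\<lambda>j. ereal (root j \<bar>c n j\<bar>)))"

definition M :: "nat \<Rightarrow> real" where
  "M n = Sup ((\<lambda>z. cmod (ybar n z)) ` {z. cmod z = 3 * R n / 4})"

definition C_k_1_on :: "nat \<Rightarrow> real set \<Rightarrow> (real \<Rightarrow> real) \<Rightarrow> bool" where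
  "C_k_1_on k I y \<longleftrightarrow> (\<exists>D :: nat \<Rightarrow> real \<Rightarrow> real.
      (\<forall>x\<in>I. D 0 x = y x) \<and>
      (\<forall>j<k. \<forall>x\<in>I. (D j has_real_derivative D (Suc j) x) (at x within I)) \<and>
      (\<exists>L. lipschitz_on L I (D k)))"

end

theory Submission
  imports Defs "HOL-Analysis.FPS_Convergence" "HOL-Real_Asymp.Real_Asymp" "HOL-Complex_Analysis.Cauchy_Integral_Formula"
begin

lemma length_clist[simp]: "length (clist n m) = m"
  by (induction m) auto

lemma clist_nth: "j < m \<Longrightarrow> clist n m ! j = c n j"
proof (induction m)
  case 0 then show ?case by simp
next
  case (Suc m)
  show ?case
  proof (cases "j < m")
    case True with Suc show ?thesis by (simp add: nth_append)
  next
    case False then have "j = m" using Suc by simp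
    then show ?thesis by (simp add: c_def)
  qed
qed

lemma c_rec: "c n m = cnext n (clist n m)"
  by (simp add: c_def nth_append)

definition Sset :: "nat \<Rightarrow> nat \<Rightarrow> (nat \<Rightarrow> nat) set" where
  "Sset k N = {g \<in> {..<k} \<rightarrow>\<^sub>E {..N}. sum g {..<k} = N}"

lemma finite_Sset: "finite (Sset k N)"
  unfolding Sset_def by (rule finite_subset[of _ "{..<k} \<rightarrow>\<^sub>E {..N}"]) (auto intro: finite_PiE)

lemma fps_prod_nth_PiE:
  fixes F :: "nat \<Rightarrow> 'a::comm_ring_1 fps"
  shows "fps_nth (\<Prod>i<k. F i) N = (\<Sum>g\<in>Sset k N. \<Prod>i<k. fps_nth (F i) (g i))"
proof (induction k arbitrary: N)
  case 0
  have "Sset 0 N = (if N = 0 then {\<lambda>_. undefined} else {})"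
    by (auto simp: Sset_def PiE_def extensional_def)
  then show ?case by simp
next
  case (Suc k)
  have "fps_nth (\<Prod>i<Suc k. F i) N = (\<Sum>a=0..N. fps_nth (\<Prod>i<k. F i) a * fps_nth (F k) (N - a))"
    by (simp add: fps_mult_nth)
  also have "\<dots> = (\<Sum>a=0..N. \<Sum>g\<in>Sset k a. (\<Prod>i<k. fps_nth (F i) (g i)) * fps_nth (F k) (N - a))"
    by (simp add: Suc sum_distrib_right)
  also have "\<dots> = (\<Sum>a=0..N. \<Sum>g\<in>{g\<in>Sset (Suc k) N. N - g k = a}. \<Prod>i<Suc k. fps_nth (F i) (g i))"
  proof (rule sum.cong[OF refl])
    fix a assume a: "a \<in> {0..N}"
    show "(\<Sum>g\<in>Sset k a. (\<Prod>i<k. fps_nth (F i) (g i)) * fps_nth (F k) (N - a)) =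
          (\<Sum>g\<in>{g\<in>Sset (Suc k) N. N - g k = a}. \<Prod>i<Suc k. fps_nth (F i) (g i))"
    proof (rule sum.reindex_bij_witness[where i="\<lambda>g. g(k := undefined)" and j="\<lambda>g. g(k := N - a)"])
      fix g assume g: "g \<in> {g\<in>Sset (Suc k) N. N - g k = a}"
      then have ge: "g \<in> {..<Suc k} \<rightarrow>\<^sub>E {..N}" "sum g {..<Suc k} = N" "N - g k = a"
        by (auto simp: Sset_def)
      have gk: "g k \<le> N" using ge(1) by auto
      have Na: "N - a = g k" using ge gk by simp
      show "(g(k := undefined))(k := N - a) = g" using Na by simp
      have s: "sum g {..<k} = a" using ge gk by simp
      have "g(k := undefined) \<in> {..<k} \<rightarrow>\<^sub>E {..a}"
      proof -
        have "g i \<le> a" if "i < k" for i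
          using s member_le_sum[of i "{..<k}" g] that by auto
        then show ?thesis using ge(1) by (auto simp: PiE_def extensional_def Pi_def)
      qed
      moreover have "sum (g(k := undefined)) {..<k} = a" using s by (metis (no_types, lifting) fun_upd_other lessThan_iff less_irrefl sum.cong)
      ultimately show "g(k := undefined) \<in> Sset k a" by (simp add: Sset_def)
    next
      fix g assume g: "g \<in> Sset k a"
      then have ge: "g \<in> {..<k} \<rightarrow>\<^sub>E {..a}" "sum g {..<k} = a" by (auto simp: Sset_def)
      have gk: "g k = undefined" using ge(1) by (auto simp: PiE_def extensional_def)
      show "(g(k := N - a))(k := undefined) = g" by (metis fun_upd_triv fun_upd_upd gk)
      have s: "sum (g(k := N - a)) {..<k} = a" using ge by (metis (no_types, lifting) fun_upd_other lessThan_iff less_irrefl sum.cong)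
      have "g(k := N - a) \<in> {..<Suc k} \<rightarrow>\<^sub>E {..N}"
        using ge(1) a by (auto simp: PiE_def extensional_def Pi_def less_Suc_eq intro: order.trans)
      moreover have "sum (g(k := N - a)) {..<Suc k} = N" using s a by simp
      ultimately show "g(k := N - a) \<in> {g\<in>Sset (Suc k) N. N - g k = a}"
        using a by (simp add: Sset_def)
      have "g i = (g(k := N - a)) i" if "i < k" for i using that by simp
      then show "(\<Prod>i<Suc k. fps_nth (F i) ((g(k := N - a)) i)) = (\<Prod>i<k. fps_nth (F i) (g i)) * fps_nth (F k) (N - a)"
        by (simp add: mult.commute)
    qed
  qed
  also have "\<dots> = (\<Sum>g\<in>Sset (Suc k) N. \<Prod>i<Suc k. fps_nth (F i) (g i))"
    by (rule sum.group) (auto simp: finite_Sset)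
  finally show ?case .
qed


lemma c0[simp]: "c n 0 = 1"
  by (simp add: c_rec cnext_def)

lemma c_rec2:
  assumes "m \<ge> 1"
  shows "c n m = (\<Sum>f\<in>Sset (2*n+2) (m-1). \<Prod>i<2*n+2. c n (f i))
       - 1 / real (2*n+1) * (\<Sum>f\<in>{f \<in> {..<2*n+1} \<rightarrow>\<^sub>E {..<m}. sum f {..<2*n+1} = m}. \<Prod>i<2*n+1. c n (f i))"
proof -
  have e1: "{f \<in> {..<2*n+2} \<rightarrow>\<^sub>E {..<m}. sum f {..<2*n+2} = m - 1} = Sset (2*n+2) (m-1)"
    using assms unfolding Sset_def by (cases m) (auto simp: lessThan_Suc_atMost)
  have p1: "(\<Prod>i<2*n+2. clist n m ! f i) = (\<Prod>i<2*n+2. c n (f i))"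
    if "f \<in> {..<2*n+2} \<rightarrow>\<^sub>E {..<m}" for f
    using that by (intro prod.cong refl clist_nth) auto
  have p2: "(\<Prod>i<2*n+1. clist n m ! f i) = (\<Prod>i<2*n+1. c n (f i))"
    if "f \<in> {..<2*n+1} \<rightarrow>\<^sub>E {..<m}" for f
    using that by (intro prod.cong refl clist_nth) auto
  have L: "cnext n (clist n m) = (\<Sum>f\<in>{f \<in> {..<2*n+2} \<rightarrow>\<^sub>E {..<m}. sum f {..<2*n+2} = m - 1}. \<Prod>i<2*n+2. clist n m ! f i)
       - 1 / real (2*n+1) * (\<Sum>f\<in>{f \<in> {..<2*n+1} \<rightarrow>\<^sub>E {..<m}. sum f {..<2*n+1} = m}. \<Prod>i<2*n+1. clist n m ! f i)"
    unfolding cnext_def Let_def length_clist by (rule if_not_P) (use assms in simp)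
  have s1: "(\<Sum>f\<in>{f \<in> {..<2*n+2} \<rightarrow>\<^sub>E {..<m}. sum f {..<2*n+2} = m - 1}. \<Prod>i<2*n+2. clist n m ! f i)
     = (\<Sum>f\<in>{f \<in> {..<2*n+2} \<rightarrow>\<^sub>E {..<m}. sum f {..<2*n+2} = m - 1}. \<Prod>i<2*n+2. c n (f i))"
    by (rule sum.cong[OF refl], rule p1) auto
  have s2: "(\<Sum>f\<in>{f \<in> {..<2*n+1} \<rightarrow>\<^sub>E {..<m}. sum f {..<2*n+1} = m}. \<Prod>i<2*n+1. clist n m ! f i)
     = (\<Sum>f\<in>{f \<in> {..<2*n+1} \<rightarrow>\<^sub>E {..<m}. sum f {..<2*n+1} = m}. \<Prod>i<2*n+1. c n (f i))"
    by (rule sum.cong[OF refl], rule p2) auto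
  then show ?thesis using e1 c_rec[of n m] L s1 s2 by simp
qed

lemma Sset_split:
  fixes cc :: "nat \<Rightarrow> real"
  assumes m: "m \<ge> 1" and c0: "cc 0 = 1"
  shows "(\<Sum>f\<in>Sset k m. \<Prod>i<k. cc (f i)) =
         (\<Sum>f\<in>{f \<in> {..<k} \<rightarrow>\<^sub>E {..<m}. sum f {..<k} = m}. \<Prod>i<k. cc (f i)) + real k * cc m"
proof -
  define e where "e i = (\<lambda>j. if j < k then (if j = i then m else 0) else undefined)" for i
  define S where "S = {f \<in> {..<k} \<rightarrow>\<^sub>E {..<m}. sum f {..<k} = m}"
  have fin: "finite (Sset k m)" by (rule finite_Sset)
  have eq: "Sset k m = S \<union> e ` {..<k}"
  proof (intro equalityI subsetI)
    fix f assume f: "f \<in> Sset k m"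
    then have fe: "f \<in> {..<k} \<rightarrow>\<^sub>E {..m}" "sum f {..<k} = m" by (auto simp: Sset_def)
    show "f \<in> S \<union> e ` {..<k}"
    proof (cases "\<exists>i<k. f i = m")
      case True
      then obtain i where i: "i < k" "f i = m" by auto
      have "f j = 0" if "j < k" "j \<noteq> i" for j
      proof -
        have "f i + f j = sum f {i, j}" using that by simp
        also have "\<dots> \<le> sum f {..<k}" using i that by (intro sum_mono2) auto
        finally show ?thesis using fe i by simp
      qed
      then have "f = e i" using fe(1) i unfolding e_def
        by (auto simp: PiE_def extensional_def)
      then show ?thesis using i by auto
    next
      case False
      then have "f \<in> S" using fe unfolding S_def by (auto simp: PiE_def Pi_def le_less)
      then show ?thesis by auto
    qed
  next
    fix f assume "f \<in> S \<union> e ` {..<k}"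
    then show "f \<in> Sset k m"
    proof
      assume "f \<in> S" then show ?thesis by (auto simp: S_def Sset_def PiE_def Pi_def)
    next
      assume "f \<in> e ` {..<k}"
      then obtain i where i: "i < k" "f = e i" by auto
      have "sum (e i) {..<k} = m"
      proof -
        have "sum (e i) {..<k} = (\<Sum>j<k. if j = i then m else 0)"
          by (rule sum.cong) (auto simp: e_def)
        then show ?thesis using i by simp
      qed
      moreover have "e i \<in> {..<k} \<rightarrow>\<^sub>E {..m}" by (auto simp: e_def split: if_splits)
      ultimately show ?thesis using i by (simp add: Sset_def)
    qed
  qed
  have disj: "S \<inter> e ` {..<k} = {}"
    using m by (auto simp: S_def e_def PiE_def Pi_def)
  have inj: "inj_on e {..<k}"
  proof
    fix i j assume "i \<in> {..<k}" "j \<in> {..<k}" "e i = e j"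
    then have "e i i = e j i" by simp
    with \<open>i \<in> {..<k}\<close> m show "i = j" by (auto simp: e_def split: if_splits)
  qed
  have pe: "(\<Prod>j<k. cc (e i j)) = cc m" if "i < k" for i
  proof -
    have "(\<Prod>j<k. cc (e i j)) = cc (e i i) * (\<Prod>j\<in>{..<k} - {i}. cc (e i j))"
      using that by (subst prod.remove[of _ i]) auto
    also have "(\<Prod>j\<in>{..<k} - {i}. cc (e i j)) = 1"
      by (rule prod.neutral) (auto simp: e_def c0)
    finally show ?thesis using that by (simp add: e_def)
  qed
  have "(\<Sum>f\<in>Sset k m. \<Prod>i<k. cc (f i)) = (\<Sum>f\<in>S. \<Prod>i<k. cc (f i)) + (\<Sum>f\<in>e ` {..<k}. \<Prod>i<k. cc (f i))"
    unfolding eq using fin eq disj by (intro sum.union_disjoint) auto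
  also have "(\<Sum>f\<in>e ` {..<k}. \<Prod>i<k. cc (f i)) = (\<Sum>i<k. \<Prod>j<k. cc (e i j))"
    using inj by (simp add: sum.reindex)
  also have "\<dots> = real k * cc m" using pe by simp
  finally show ?thesis by (simp add: S_def)
qed

lemma aux_alg: "(q::real) > 0 \<Longrightarrow> (z::real) = a - 1/q*b \<Longrightarrow> b + q*z = q*a"
  by (simp add: field_simps)

definition B :: "nat \<Rightarrow> real fps" where "B n = Abs_fps (c n)"

lemma B_power_nth: "fps_nth (B n ^ k) N = (\<Sum>g\<in>Sset k N. \<Prod>i<k. c n (g i))"
proof -
  have "B n ^ k = (\<Prod>i<k. B n)" by simp
  then show ?thesis by (simp only: fps_prod_nth_PiE) (simp add: B_def)
qed

lemma B_eq: "B n ^ (2*n+1) = 1 + fps_const (real (2*n+1)) * fps_X * B n ^ (2*n+2)"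
proof (rule fps_ext)
  fix m
  show "fps_nth (B n ^ (2*n+1)) m = fps_nth (1 + fps_const (real (2*n+1)) * fps_X * B n ^ (2*n+2)) m"
  proof (cases "m = 0")
    case True
    then show ?thesis by (simp add: B_def fps_power_zeroth)
  next
    case False
    then have m: "m \<ge> 1" by simp
    have "fps_nth (B n ^ (2*n+1)) m = (\<Sum>f\<in>{f \<in> {..<2*n+1} \<rightarrow>\<^sub>E {..<m}. sum f {..<2*n+1} = m}. \<Prod>i<2*n+1. c n (f i)) + real (2*n+1) * c n m"
      unfolding B_power_nth by (rule Sset_split[OF m]) simp
    also have "\<dots> = real (2*n+1) * fps_nth (B n ^ (2*n+2)) (m-1)"
      unfolding B_power_nth by (rule aux_alg[OF _ c_rec2[OF m]]) simp
    finally show ?thesis using m by (cases m) (simp_all add: mult.assoc)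
  qed
qed


lemma B_nz: "B n \<noteq> 0"
proof
  assume "B n = 0"
  then have "fps_nth (B n) 0 = 0" by simp
  then show False by (simp add: B_def)
qed

lemma B_deriv_eq:
  "fps_deriv (B n) = B n ^ 2 + of_nat (2*n+2) * fps_X * fps_deriv (B n) * B n"
proof -
  define q where "q = 2*n+1"
  define b where "b = B n"
  define d where "d = fps_deriv b"
  have eq: "b ^ q = 1 + fps_const (real q) * fps_X * b ^ (q+1)"
    using B_eq[of n] by (simp add: q_def b_def)
  have "fps_deriv (b ^ q) = fps_deriv (1 + fps_const (real q) * fps_X * b ^ (q+1))"
    by (simp only: eq)
  moreover have "fps_deriv (b ^ q) = of_nat q * d * b ^ (q - 1)"
    unfolding d_def by (rule fps_deriv_power')
  moreover have "fps_deriv (b ^ (q+1)) = of_nat (q+1) * d * b ^ q"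
    unfolding d_def using fps_deriv_power'[of b "q+1"] by simp
  moreover have "fps_deriv (1 + fps_const (real q) * fps_X * b ^ (q+1)) =
     fps_const (real q) * (fps_X * fps_deriv (b ^ (q+1)) + b ^ (q+1))"
    by (simp only: fps_deriv_add fps_deriv_mult mult.assoc fps_deriv_fps_X) simp
  ultimately have "of_nat q * d * b ^ (q - 1) =
     fps_const (real q) * (fps_X * (of_nat (q+1) * d * b ^ q) + b ^ (q+1))"
    by simp
  moreover have "b ^ q = b * b ^ (q - 1)" "b ^ (q+1) = b * b * b ^ (q - 1)"
    by (simp_all add: q_def power2_eq_square)
  ultimately have "of_nat q * (d * b ^ (q - 1)) =
     of_nat q * ((b * b + of_nat (q+1) * fps_X * d * b) * b ^ (q - 1))"
    by (simp add: fps_of_nat algebra_simps)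
  moreover have "(of_nat q :: real fps) \<noteq> 0"
  proof -
    have "fps_const (real q) \<noteq> 0" by (simp add: q_def)
    then show ?thesis by (metis fps_of_nat)
  qed
  ultimately have "d * b ^ (q - 1) = (b * b + of_nat (q+1) * fps_X * d * b) * b ^ (q - 1)"
    by simp
  moreover have "b ^ (q - 1) \<noteq> 0" using B_nz[of n] by (simp add: b_def)
  ultimately have "d = b * b + of_nat (q+1) * fps_X * d * b" using mult_right_cancel by blast
  then show ?thesis by (simp add: d_def b_def q_def power2_eq_square)
qed

lemma c_drec:
  "real (m+1) * c n (m+1) = (\<Sum>i=0..m. c n i * c n (m - i)) +
     (if m = 0 then 0 else real (2*n+2) * (\<Sum>i=0..m-1. real (i+1) * c n (i+1) * c n (m - 1 - i)))"
proof -
  have "fps_nth (fps_deriv (B n)) m = fps_nth (B n ^ 2 + of_nat (2*n+2) * fps_X * fps_deriv (B n) * B n) m"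
    by (subst B_deriv_eq) (rule refl)
  also have "of_nat (2*n+2) * fps_X * fps_deriv (B n) * B n = fps_X * (fps_const (real (2*n+2)) * (fps_deriv (B n) * B n))"
    by (simp add: fps_of_nat algebra_simps del: of_nat_Suc of_nat_add)
  finally have "fps_nth (fps_deriv (B n)) m = fps_nth (B n * B n) m +
     (if m = 0 then 0 else real (2*n+2) * fps_nth (fps_deriv (B n) * B n) (m - 1))"
    by (simp only: fps_add_nth fps_X_mult_nth power2_eq_square fps_mult_left_const_nth)
  then show ?thesis
    by (simp only: fps_mult_nth fps_deriv_nth B_def fps_nth_Abs_fps)

qed


lemma c_nonneg: "c n m \<ge> 0"
proof (induction m rule: less_induct)
  case (less m)
  show ?case
  proof (cases m)
    case 0 then show ?thesis by simp
  next
    case (Suc k)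
    have IH: "\<And>j. j \<le> k \<Longrightarrow> c n j \<ge> 0" using less Suc by simp
    have s1: "(\<Sum>i=0..k. c n i * c n (k - i)) \<ge> 0"
      by (rule sum_nonneg) (simp add: IH)
    have s2: "(\<Sum>i=0..k-1. real (i+1) * c n (i+1) * c n (k - 1 - i)) \<ge> 0" if "k \<noteq> 0"
    proof (rule sum_nonneg)
      fix i assume "i \<in> {0..k-1}"
      then have "i + 1 \<le> k" "k - 1 - i \<le> k" using that by auto
      then show "real (i+1) * c n (i+1) * c n (k - 1 - i) \<ge> 0" by (simp add: IH)
    qed
    have "real (k+1) * c n (k+1) \<ge> 0"
      using s1 s2 c_drec[of k n] by (cases "k = 0") simp_all
    then show ?thesis using Suc by (simp add: zero_le_mult_iff)
  qed
qed


lemma c1: "c n 1 = 1"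
  using c_drec[of 0 n] by simp

lemma c_step_lower:
  assumes "m \<ge> 1"
  shows "real (m+1) * c n (m+1) \<ge> real (2*n+2) * (real m * c n m)"
proof -
  have "real m * c n m \<le> (\<Sum>i=0..m-1. real (i+1) * c n (i+1) * c n (m - 1 - i))"
  proof -
    have "real m * c n m = real ((m-1)+1) * c n ((m-1)+1) * c n (m - 1 - (m-1))"
      using assms by simp
    also have "\<dots> \<le> (\<Sum>i=0..m-1. real (i+1) * c n (i+1) * c n (m - 1 - i))"
      by (rule member_le_sum) (auto intro!: mult_nonneg_nonneg c_nonneg)
    finally show ?thesis .
  qed
  then have "real (2*n+2) * (real m * c n m) \<le> real (2*n+2) * (\<Sum>i=0..m-1. real (i+1) * c n (i+1) * c n (m - 1 - i))"
    by (intro mult_left_mono) auto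
  also have "\<dots> \<le> real (m+1) * c n (m+1)"
    using assms c_drec[of m n] sum_nonneg[of "{0..m}" "\<lambda>i. c n i * c n (m - i)"] by (simp add: c_nonneg)
  finally show ?thesis .
qed

lemma c_lower:
  assumes "m \<ge> 1"
  shows "c n m \<ge> real (2*n+2) ^ (m-1) / real m"
  using assms
proof (induction m rule: dec_induct)
  case base then show ?case using c1[of n] by simp
next
  case (step m)
  have "real (2*n+2) ^ (Suc m - 1) / real (Suc m) = real (2*n+2) * (real m * (real (2*n+2) ^ (m-1) / real m)) / real (m+1)"
    using step(1) by (cases m) auto
  also have "\<dots> \<le> real (2*n+2) * (real m * c n m) / real (m+1)"
    using step by (intro divide_right_mono mult_left_mono) auto
  also have "\<dots> \<le> c n (m+1)"
    using c_step_lower[OF step(1), of n] by (simp add: field_simps)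
  finally show ?case by simp
qed

lemma c_le_S1:
  assumes "m \<ge> 1"
  shows "c n m \<le> fps_nth (B n ^ (2*n+2)) (m-1)"
proof -
  have "0 \<le> (\<Sum>f\<in>{f \<in> {..<2*n+1} \<rightarrow>\<^sub>E {..<m}. sum f {..<2*n+1} = m}. \<Prod>i<2*n+1. c n (f i))"
    by (intro sum_nonneg prod_nonneg c_nonneg)
  then show ?thesis unfolding B_power_nth c_rec2[OF assms] by simp
qed

definition P :: "nat \<Rightarrow> real \<Rightarrow> nat \<Rightarrow> real" where
  "P n x N = (\<Sum>m\<le>N. c n m * x ^ m)"

lemma P_nonneg: "x \<ge> 0 \<Longrightarrow> P n x N \<ge> 0"
  unfolding P_def by (intro sum_nonneg mult_nonneg_nonneg c_nonneg) auto

lemma P_rec: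
  assumes x: "x \<ge> 0" and N: "N \<ge> 1"
  shows "P n x N \<le> 1 + x * P n x (N-1) ^ (2*n+2)"
proof -
  define p where "p = 2*n+2"
  define T where "T = (\<lambda>g. \<Prod>i<p. c n (g i) * x ^ (g i))"
  have Tnn: "T g \<ge> 0" for g unfolding T_def by (intro prod_nonneg mult_nonneg_nonneg c_nonneg) (use x in auto)
  have "P n x N = c n 0 * x^0 + (\<Sum>m\<in>{1..N}. c n m * x ^ m)"
    unfolding P_def by (subst atMost_atLeast0) (simp add: sum.atLeast_Suc_atMost)
  also have "(\<Sum>m\<in>{1..N}. c n m * x ^ m) \<le> (\<Sum>m\<in>{1..N}. fps_nth (B n ^ p) (m-1) * x ^ m)"
    using c_le_S1 x by (intro sum_mono mult_right_mono) (auto simp: p_def)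
  also have "(\<Sum>m\<in>{1..N}. fps_nth (B n ^ p) (m-1) * x ^ m) = x * (\<Sum>k<N. fps_nth (B n ^ p) k * x ^ k)"
  proof -
    have "(\<Sum>m\<in>{1..N}. fps_nth (B n ^ p) (m-1) * x ^ m) = (\<Sum>k<N. fps_nth (B n ^ p) k * x ^ (Suc k))"
      by (rule sum.reindex_bij_witness[where i=Suc and j="\<lambda>m. m - 1"]) auto
    then show ?thesis by (simp add: sum_distrib_left algebra_simps)
  qed
  also have "(\<Sum>k<N. fps_nth (B n ^ p) k * x ^ k) = (\<Sum>k<N. \<Sum>g\<in>Sset p k. T g)"
  proof (rule sum.cong[OF refl])
    fix k
    show "fps_nth (B n ^ p) k * x ^ k = (\<Sum>g\<in>Sset p k. T g)"
      unfolding B_power_nth sum_distrib_right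
    proof (rule sum.cong[OF refl])
      fix g assume "g \<in> Sset p k"
      then have "sum g {..<p} = k" by (simp add: Sset_def)
      then have "x ^ k = (\<Prod>i<p. x ^ g i)" using power_sum[of x g "{..<p}"] by simp
      then show "(\<Prod>i<p. c n (g i)) * x ^ k = T g" by (simp add: T_def prod.distrib)
    qed
  qed
  also have "\<dots> = sum T (\<Union>k<N. Sset p k)"
  proof (rule sum.UNION_disjoint[symmetric])
    show "\<forall>k\<in>{..<N}. finite (Sset p k)" by (simp add: finite_Sset)
    show "\<forall>i\<in>{..<N}. \<forall>j\<in>{..<N}. i \<noteq> j \<longrightarrow> Sset p i \<inter> Sset p j = {}"
      by (auto simp: Sset_def)
  qed simp
  also have "\<dots> \<le> sum T ({..<p} \<rightarrow>\<^sub>E {..<N})"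
  proof (rule sum_mono2)
    show "finite ({..<p} \<rightarrow>\<^sub>E {..<N})" by (auto intro: finite_PiE)
    show "(\<Union>k<N. Sset p k) \<subseteq> {..<p} \<rightarrow>\<^sub>E {..<N}"
    proof
      fix g assume "g \<in> (\<Union>k<N. Sset p k)"
      then obtain k where k: "k < N" "g \<in> {..<p} \<rightarrow>\<^sub>E {..k}" by (auto simp: Sset_def)
      have "{..<p} \<rightarrow>\<^sub>E {..k} \<subseteq> {..<p} \<rightarrow>\<^sub>E {..<N}" using k(1) by (intro PiE_mono) auto
      then show "g \<in> {..<p} \<rightarrow>\<^sub>E {..<N}" using k(2) by blast
    qed
  qed (rule Tnn)
  also have "\<dots> = (\<Prod>i<p. \<Sum>j<N. c n j * x ^ j)"
    unfolding T_def by (rule prod_sum_PiE[symmetric]) auto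
  also have "\<dots> = P n x (N-1) ^ p"
    using N by (simp add: P_def lessThan_Suc_atMost[symmetric])
  finally show ?thesis using x by (simp add: p_def mult_left_mono)
qed



lemma P_le2: "P n (1 / 2^(2*n+4)) N \<le> 2"
proof (induction N)
  case 0 then show ?case by (simp add: P_def)
next
  case (Suc N)
  define x :: real where "x = 1 / 2^(2*n+4)"
  have x0: "x \<ge> 0" by (simp add: x_def)
  have "P n x (Suc N) \<le> 1 + x * P n x N ^ (2*n+2)"
    using P_rec[OF x0, of "Suc N" n] by simp
  also have "\<dots> \<le> 1 + x * 2 ^ (2*n+2)"
    using Suc P_nonneg[OF x0, of n N] x0 unfolding x_def[symmetric]
    by (intro add_left_mono mult_left_mono power_mono) auto
  also have "x * 2 ^ (2*n+2) = 1/4" by (simp add: x_def power_add)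
  finally show ?case by (simp add: x_def)
qed

lemma c_upper: "c n m \<le> 2 * (2^(2*n+4)) ^ m"
proof -
  define x :: real where "x = 1 / 2^(2*n+4)"
  have "c n m * x ^ m \<le> P n x m"
    unfolding P_def by (rule member_le_sum) (auto intro!: mult_nonneg_nonneg c_nonneg simp: x_def)
  also have "\<dots> \<le> 2" unfolding x_def by (rule P_le2)
  finally have "c n m * x ^ m \<le> 2" .
  then show ?thesis by (simp add: x_def field_simps power_one_over)
qed


definition Lc :: "nat \<Rightarrow> ereal" where
  "Lc n = limsup (\<lambda>j. ereal (root j \<bar>c n j\<bar>))"

lemma root_c_upper: "root j \<bar>c n j\<bar> \<le> 2^(2*n+5)"
proof (cases "j = 0")
  case True then show ?thesis by simp
next
  case False
  have "\<bar>c n j\<bar> = c n j" using c_nonneg by simp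
  also have "\<dots> \<le> 2 * (2^(2*n+4)) ^ j" by (rule c_upper)
  also have "\<dots> \<le> (2^(2*n+5)) ^ j"
  proof -
    have "(2::real) ^ 1 \<le> 2 ^ j" using False by (intro power_increasing) auto
    then have "2 * (2^(2*n+4)) ^ j \<le> (2::real) ^ j * (2^(2*n+4)) ^ j" by (intro mult_right_mono) auto
    also have "\<dots> = (2 * 2^(2*n+4)) ^ j" by (rule power_mult_distrib[symmetric])
    also have "(2::real) * 2^(2*n+4) = 2^(2*n+5)" by (simp add: power_Suc[symmetric] del: power_Suc)
    finally show ?thesis .
  qed
  finally have "root j \<bar>c n j\<bar> \<le> root j ((2^(2*n+5)) ^ j)"
    using False by (intro real_root_le_mono) auto
  also have "\<dots> = 2^(2*n+5)" using False by (simp add: real_root_power_cancel)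
  finally show ?thesis .
qed

lemma root_c_lower_ev: "eventually (\<lambda>j. 3 * real (2*n+2) / 4 \<le> root j \<bar>c n j\<bar>) sequentially"
proof -
  have "eventually (\<lambda>m. real m * (2 * real n + 2) \<le> (4/3::real)^m) at_top"
    by real_asymp
  moreover have "eventually (\<lambda>m::nat. m \<ge> 1) at_top" by (rule eventually_ge_at_top)
  ultimately show ?thesis
  proof eventually_elim
    case (elim m)
    define Q :: real where "Q = real (2*n+2)"
    have Q: "Q > 0" by (simp add: Q_def)
    have mQ: "real m * Q \<le> (4/3)^m" using elim by (simp add: Q_def add.commute)
    have e34: "3 * Q / 4 = (3/4) * Q" by simp
    have "(3 * Q / 4) ^ m = (3/4)^m * Q^m" by (simp only: e34 power_mult_distrib)
    also have "\<dots> \<le> Q ^ (m-1) / real m"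
    proof -
      have "(3/4)^m * Q^m * (real m * Q) \<le> (3/4)^m * Q^m * (4/3)^m"
        using mQ Q by (intro mult_left_mono) auto
      also have "\<dots> = Q^m" by (simp add: power_mult_distrib[symmetric])
      also have "\<dots> = Q^(m-1) * Q" using elim by (cases m) auto
      finally have "(3/4)^m * Q^m * (real m * Q) \<le> Q^(m-1) * Q" .
      then have "(3/4)^m * Q^m * real m \<le> Q^(m-1)" using Q by (simp add: mult_ac)
      then show ?thesis using elim by (simp add: field_simps)
    qed
    also have "\<dots> \<le> c n m" using c_lower[OF elim(2)] by (simp add: Q_def)
    finally have "(3 * Q / 4) ^ m \<le> \<bar>c n m\<bar>" by simp
    then have "root m ((3 * Q / 4) ^ m) \<le> root m \<bar>c n m\<bar>"
      using elim by (intro real_root_le_mono) auto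
    then show ?case using elim Q by (simp add: real_root_power_cancel Q_def)
  qed
qed

lemma Lc_bounds: "ereal (3 * real (2*n+2) / 4) \<le> Lc n" "Lc n \<le> ereal (2^(2*n+5))"
proof -
  show "ereal (3 * real (2*n+2) / 4) \<le> Lc n"
    unfolding Lc_def using root_c_lower_ev[of n]
    by (intro le_Limsup) (auto elim: eventually_mono)
  show "Lc n \<le> ereal (2^(2*n+5))"
    unfolding Lc_def using root_c_upper[of _ n]
    by (intro Limsup_bounded) auto
qed

lemma Lc_real: obtains l where "Lc n = ereal l" "l \<ge> 3 * real (2*n+2) / 4" "l \<le> 2^(2*n+5)"
proof -
  from Lc_bounds[of n] obtain l where "Lc n = ereal l"
    by (cases "Lc n") auto
  with Lc_bounds[of n] show ?thesis using that by auto
qed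

lemma R_eq: "Lc n = ereal l \<Longrightarrow> R n = real (2*n+1) / l"
  unfolding R_def Lc_def[symmetric] by simp

lemma R_bounds: "R n > 0" "R n < 4/3"
proof -
  obtain l where l: "Lc n = ereal l" "l \<ge> 3 * real (2*n+2) / 4" "l \<le> 2^(2*n+5)"
    by (rule Lc_real)
  have "3 * real (2*n+2) / 4 > 0" by simp
  then have lpos: "l > 0" using l(2) by linarith
  show "R n > 0" using R_eq[OF l(1)] lpos by simp
  have "3 * real (2*n+1) < 4 * l" using l(2) by simp
  moreover have "3 * R n * l = 3 * real (2*n+1)" using R_eq[OF l(1)] lpos by simp
  ultimately have "(3 * R n) * l < 4 * l" by linarith
  then have "3 * R n < 4" using lpos mult_less_cancel_right_pos by blast
  then show "R n < 4/3" by simp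
qed


lemma cmod_q[simp]: "cmod (1 + 2 * complex_of_nat n) = 1 + 2 * real n"
proof -
  have "(1 + 2 * complex_of_nat n) = of_nat (2*n+1)" by simp
  then show ?thesis by (simp only: norm_of_nat)
qed

lemma c1'[simp]: "c n (Suc 0) = 1" using c1[of n] by simp

definition Fy :: "nat \<Rightarrow> complex fps" where
  "Fy n = Abs_fps (\<lambda>j. complex_of_real ((-1)^j / real (2*n+1)^j * c n j))"

lemma ybar_eval: "ybar n = eval_fps (Fy n)"
  by (simp add: fun_eq_iff ybar_def eval_fps_def Fy_def)

lemma conv_Fy: "fps_conv_radius (Fy n) = ereal (R n)"
proof -
  obtain l where l: "Lc n = ereal l" "l \<ge> 3 * real (2*n+2) / 4" "l \<le> 2^(2*n+5)"
    by (rule Lc_real)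
  have "3 * real (2*n+2) / 4 > 0" by simp
  then have lpos: "l > 0" using l(2) by linarith
  define q where "q = real (2*n+1)"
  have q: "q > 0" by (simp add: q_def)
  have seq: "ereal (root j (norm (fps_nth (Fy n) j))) = ereal (root j \<bar>c n j\<bar>) * ereal (1/q)" for j
  proof (cases "j = 0")
    case True then show ?thesis by simp
  next
    case False
    have "norm (fps_nth (Fy n) j) = \<bar>c n j\<bar> / q ^ j"
      by (simp add: Fy_def q_def norm_mult norm_divide norm_power)
    then have "root j (norm (fps_nth (Fy n) j)) = root j \<bar>c n j\<bar> / q"
      using False q by (simp add: real_root_divide real_root_power_cancel)
    then show ?thesis by simp
  qed
  have "fps_conv_radius (Fy n) = inverse (limsup (\<lambda>j. ereal (root j \<bar>c n j\<bar>) * ereal (1/q)))"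
    unfolding fps_conv_radius_def conv_radius_def seq ..
  also have "\<dots> = inverse (Lc n * ereal (1/q))"
    unfolding Lc_def using q by (subst limsup_ereal_mult_right) auto
  also have "\<dots> = ereal (q / l)" using l(1) lpos q by simp
  also have "q / l = R n" using R_eq[OF l(1)] by (simp add: q_def)
  finally show ?thesis .
qed

lemma ybar_holo: "ybar n holomorphic_on ball 0 (R n)"
  unfolding ybar_eval by (rule holomorphic_on_eval_fps) (simp add: conv_Fy)

lemma deriv_ybar0: "deriv (ybar n) 0 = - 1 / of_nat (2*n+1)"
proof -
  have "(eval_fps (Fy n) has_field_derivative eval_fps (fps_deriv (Fy n)) 0) (at 0)"
    by (rule has_field_derivative_eval_fps) (simp add: conv_Fy R_bounds)
  then have "deriv (ybar n) 0 = eval_fps (fps_deriv (Fy n)) 0"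
    unfolding ybar_eval by (rule DERIV_imp_deriv)
  also have "\<dots> = - 1 / of_nat (2*n+1)"
    by (simp add: eval_fps_at_0 Fy_def c1)
  finally show ?thesis .
qed

lemma M_lower: "M n \<ge> 3 * R n / (4 * real (2*n+1))"
proof -
  define \<rho> where "\<rho> = 3 * R n / 4"
  have \<rho>: "\<rho> > 0" "\<rho> < R n" using R_bounds[of n] by (auto simp: \<rho>_def)
  have cont: "continuous_on (cball 0 \<rho>) (ybar n)"
    by (rule holomorphic_on_imp_continuous_on, rule holomorphic_on_subset[OF ybar_holo]) (use \<rho> in auto)
  have sph: "{z. cmod z = 3 * R n / 4} = sphere 0 \<rho>" by (auto simp: \<rho>_def)
  have "compact ((\<lambda>z. cmod (ybar n z)) ` sphere 0 \<rho>)"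
    by (rule compact_continuous_image, rule continuous_on_norm, rule continuous_on_subset[OF cont])
       (auto simp: compact_sphere)
  then have bdd: "bdd_above ((\<lambda>z. cmod (ybar n z)) ` sphere 0 \<rho>)"
    by (auto intro: bounded_imp_bdd_above compact_imp_bounded)
  have nof: "norm (ybar n x) \<le> M n" if "norm (0 - x) = \<rho>" for x
    unfolding M_def sph using that by (intro cSup_upper bdd) auto
  have "norm ((deriv ^^ 1) (ybar n) 0) \<le> fact 1 * M n / \<rho> ^ 1"
    by (rule Cauchy_inequality[OF holomorphic_on_subset[OF ybar_holo] cont \<rho>(1) nof])
       (use \<rho> in auto)
  then have "1 / real (2*n+1) \<le> M n / \<rho>"
    by (simp add: deriv_ybar0 norm_divide)
  then show ?thesis using \<rho> by (simp add: \<rho>_def field_simps)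
qed


lemma elem_root:
  fixes u :: real and q :: nat
  assumes q: "q \<ge> 1" and u: "u > 0" and t: "u^q \<ge> 2/3"
  shows "\<bar>1 - u\<bar> \<le> 3 / real q * \<bar>u^q - 1\<bar> * u^2"
proof -
  define S where "S = (\<Sum>i<q. u^i)"
  have eq: "u^q - 1 = (u - 1) * S" unfolding S_def by (rule power_diff_1_eq)
  have key: "real q \<le> 3 * (S * u^2)"
  proof (cases "u \<ge> 1")
    case True
    have "real q = (\<Sum>i<q. 1)" by simp
    also have "\<dots> \<le> (\<Sum>i<q. u^i * u^2)"
    proof (intro sum_mono)
      fix i show "1 \<le> u^i * u^2" using True by (metis one_le_power power_add)
    qed
    also have "\<dots> = S * u^2" by (simp add: S_def sum_distrib_right)
    finally show ?thesis by simp
  next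
    case False
    have uq: "u^q \<le> u" using False u q by (metis less_eq_real_def not_le power_decreasing power_one_right)
    have "u^(q+1) = u^q * u" by simp
    also have "\<dots> \<ge> (2/3) * (2/3)" using t uq
      by (intro mult_mono) auto
    finally have uq1: "u^(q+1) \<ge> 4/9" by simp
    have "real q * (4/9) = (\<Sum>i<q. 4/9)" by simp
    also have "\<dots> \<le> (\<Sum>i<q. u^i * u^2)"
    proof (intro sum_mono)
      fix i assume "i \<in> {..<q}"
      then have "u^(q+1) \<le> u^(i+2)" using False u by (intro power_decreasing) auto
      moreover have "u^(i+2) = u^i * u^2" by (rule power_add)
      ultimately show "4/9 \<le> u^i * u^2" using uq1 by linarith
    qed
    also have "\<dots> = S * u^2" by (simp add: S_def sum_distrib_right)
    finally show ?thesis by simp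
  qed
  have S0: "S \<ge> 0" unfolding S_def using u by (intro sum_nonneg) auto
  have "\<bar>1 - u\<bar> = \<bar>u - 1\<bar> * 1" by simp
  also have "\<dots> \<le> \<bar>u - 1\<bar> * (3 / real q * (S * u^2))"
    using key q by (intro mult_left_mono) (auto simp: field_simps)
  also have "\<dots> = 3 / real q * \<bar>u^q - 1\<bar> * u^2"
    unfolding eq using S0 by (simp add: abs_mult)
  finally show ?thesis .
qed


theorem lemmaA3:
  fixes n :: nat and r xs ys a1 :: real and y a2 :: "real \<Rightarrow> real"
  defines "I \<equiv> {-r..r}"
  defines "A \<equiv> Sup ((\<lambda>x. \<bar>a2 x\<bar>) ` I)"
  assumes n: "n \<ge> 1"
    and r: "r > 0"
    and xs: "xs \<in> I"
    and reg: "C_k_1_on (2*n+1) I y"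
    and a1: "a1 > 0"
    and a2: "continuous_on I a2"
    and yform: "\<forall>x\<in>I. y x = ys + a1 * (x - xs)^(2*n+1) + a2 x * (x - xs)^(2*n+2)"
    and h1: "real (2*n+2) * A / (real (2*n+1) * a1) * (r + \<bar>xs\<bar>) < 1"
    and h2: "A / (a1 * R n) * (r + \<bar>xs\<bar>) < 1/4"
  shows "(\<forall>x\<in>I. \<bar>(x - xs) - root (2*n+1) ((y x - ys) / a1)\<bar>
            \<le> 4 * M n * A / (a1 * R n) * (root (2*n+1) \<bar>(y x - ys) / a1\<bar>)^2)
         \<and> {v. \<bar>v - ys\<bar> \<le> a1 * (r - \<bar>xs\<bar>)^(2*n+1) / real (2*n+2)} \<subseteq> y ` I"
proof -
  define q where "q = 2*n+1"
  have q1: "q \<ge> 1" by (simp add: q_def)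
  have oddq: "odd q" by (simp add: q_def)
  have qp: "2*n+2 = q+1" by (simp add: q_def)
  have Rb: "R n > 0" "R n < 4/3" by (rule R_bounds)+
  have cpt: "compact I" by (simp add: I_def)
  have bdd: "bdd_above ((\<lambda>x. \<bar>a2 x\<bar>) ` I)"
    by (rule bounded_imp_bdd_above, rule compact_imp_bounded, rule compact_continuous_image)
       (use a2 cpt in \<open>auto intro: continuous_intros\<close>)
  have Ab: "\<bar>a2 x\<bar> \<le> A" if "x \<in> I" for x
    unfolding A_def using that bdd by (intro cSup_upper) auto
  have A0: "A \<ge> 0" using Ab[OF xs] by simp
  have xsb: "\<bar>xs\<bar> \<le> r" using xs by (auto simp: I_def)
  have wb: "\<bar>x - xs\<bar> \<le> r + \<bar>xs\<bar>" if "x \<in> I" for x using that by (auto simp: I_def)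
  have small: "A * (r + \<bar>xs\<bar>) / a1 < 1/3"
  proof -
    have "A * (r + \<bar>xs\<bar>) / a1 = R n * (A / (a1 * R n) * (r + \<bar>xs\<bar>))"
      using Rb a1 by (simp add: field_simps)
    also have "\<dots> \<le> R n * (1/4)" using h2 Rb by (intro mult_left_mono) auto
    also have "\<dots> < 1/3" using Rb by simp
    finally show ?thesis .
  qed
  have Kb: "3 / real q * (A / a1) \<le> 4 * M n * A / (a1 * R n)"
  proof -
    have "3 * R n / (4 * real q) \<le> M n" using M_lower[of n] by (simp add: q_def)
    then have "3 / real q \<le> 4 * M n / R n" using Rb by (simp add: field_simps q_def)
    then have "3 / real q * (A / a1) \<le> 4 * M n / R n * (A / a1)"
      using A0 a1 by (intro mult_right_mono) auto
    then show ?thesis by (simp add: field_simps)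
  qed
  have part1: "\<bar>(x - xs) - root q ((y x - ys) / a1)\<bar>
            \<le> 4 * M n * A / (a1 * R n) * (root q \<bar>(y x - ys) / a1\<bar>)^2" if x: "x \<in> I" for x
  proof -
    define w where "w = x - xs"
    define e where "e = a2 x / a1"
    define t where "t = 1 + e * w"
    define u where "u = root q t"
    have ew: "\<bar>e * w\<bar> \<le> A * (r + \<bar>xs\<bar>) / a1"
    proof -
      have "\<bar>e * w\<bar> = \<bar>a2 x\<bar> * \<bar>w\<bar> / a1" using a1 by (simp add: e_def abs_mult)
      also have "\<dots> \<le> A * (r + \<bar>xs\<bar>) / a1"
        using Ab[OF x] wb[OF x] a1 by (intro divide_right_mono mult_mono) (auto simp: w_def)
      finally show ?thesis .
    qed
    have ew': "\<bar>e\<bar> * \<bar>w\<bar> \<le> A / a1 * \<bar>w\<bar>"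
      using Ab[OF x] a1 by (intro mult_right_mono) (auto simp: e_def abs_div intro: divide_right_mono)
    have "\<bar>e * w\<bar> < 1/3" using ew small by linarith
    then have t0: "t \<ge> 2/3" "t > 0" unfolding t_def by linarith+
    have yq: "(y x - ys) / a1 = w^q * t"
      using yform x a1 by (simp add: w_def t_def e_def q_def field_simps)
    have u0: "u > 0" using t0 q1 by (simp add: u_def)
    have uq: "u^q = t" using t0 q1 by (simp add: u_def)
    have r1: "root q ((y x - ys) / a1) = w * u"
      unfolding yq real_root_mult u_def using oddq by (simp add: odd_real_root_power_cancel)
    have r2: "root q \<bar>(y x - ys) / a1\<bar> = \<bar>w\<bar> * u"
    proof -
      have "root q \<bar>(y x - ys) / a1\<bar> = \<bar>root q ((y x - ys) / a1)\<bar>" by (rule real_root_abs) (use q1 in simp)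
      then show ?thesis using r1 u0 by (simp add: abs_mult)
    qed
    have el: "\<bar>1 - u\<bar> \<le> 3 / real q * \<bar>u^q - 1\<bar> * u^2"
      by (rule elem_root[OF q1 u0]) (use uq t0 in linarith)
    have "\<bar>w - w * u\<bar> = \<bar>w\<bar> * \<bar>1 - u\<bar>" by (simp add: abs_mult[symmetric] algebra_simps)
    also have "\<dots> \<le> \<bar>w\<bar> * (3 / real q * (\<bar>e\<bar> * \<bar>w\<bar>) * u^2)"
      using el by (intro mult_left_mono) (auto simp: uq t_def abs_mult)
    also have "\<dots> \<le> \<bar>w\<bar> * (3 / real q * (A / a1 * \<bar>w\<bar>) * u^2)"
    proof -
      have "3 / real q * (\<bar>e\<bar> * \<bar>w\<bar>) * u^2 \<le> 3 / real q * (A / a1 * \<bar>w\<bar>) * u^2"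
        by (rule mult_right_mono[OF mult_left_mono[OF ew']]) auto
      then show ?thesis by (rule mult_left_mono) simp
    qed
    also have "\<dots> = 3 / real q * (A / a1) * (\<bar>w\<bar> * u)^2"
      by (simp add: power2_eq_square)
    also have "\<dots> \<le> 4 * M n * A / (a1 * R n) * (\<bar>w\<bar> * u)^2"
      using Kb by (intro mult_right_mono) auto
    finally show ?thesis unfolding r1 r2 w_def .
  qed
  have contY: "continuous_on I y"
  proof -
    have "continuous_on I (\<lambda>x. ys + a1 * (x - xs)^(2*n+1) + a2 x * (x - xs)^(2*n+2))"
      using a2 by (intro continuous_intros)
    then show ?thesis using yform by (metis (no_types, lifting) continuous_on_cong)
  qed
  define d where "d = r - \<bar>xs\<bar>"
  have d0: "d \<ge> 0" using xsb by (simp add: d_def)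
  have hA: "A * (r + \<bar>xs\<bar>) < real q * a1 / real (q+1)"
  proof -
    have "real (q+1) * A / (real q * a1) * (r + \<bar>xs\<bar>) < 1" using h1 by (simp add: q_def)
    moreover have "real (q+1) * A / (real q * a1) * (r + \<bar>xs\<bar>) = (real (q+1) * (A * (r + \<bar>xs\<bar>))) / (real q * a1)"
      by simp
    moreover have "real q * a1 > 0" using a1 q1 by simp
    ultimately have "real (q+1) * (A * (r + \<bar>xs\<bar>)) < real q * a1"
      by (simp add: pos_divide_less_eq)
    then show ?thesis by (simp add: field_simps)
  qed
  have coef: "a1 + a2 z * (z - xs) \<ge> a1 / real (q+1)" if z: "z \<in> I" for z
  proof -
    have "\<bar>a2 z * (z - xs)\<bar> \<le> A * (r + \<bar>xs\<bar>)"
      unfolding abs_mult using Ab[OF z] wb[OF z] A0 by (intro mult_mono) auto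
    then have "a2 z * (z - xs) \<ge> - (real q * a1 / real (q+1))" using hA by linarith
    moreover have "a1 - real q * a1 / real (q+1) = a1 / real (q+1)"
      by (simp add: field_simps)
    ultimately show ?thesis by linarith
  qed
  have yz: "y z - ys = (z - xs)^q * (a1 + a2 z * (z - xs))" if "z \<in> I" for z
  proof -
    have "y z = ys + a1 * (z - xs)^q + a2 z * (z - xs)^(q+1)" using yform that by (simp add: q_def qp)
    then show ?thesis by (simp add: algebra_simps)
  qed
  have rI: "r \<in> I" "-r \<in> I" using r by (auto simp: I_def)
  have top: "y r - ys \<ge> a1 * d^q / real (q+1)"
  proof -
    have "d \<le> r - xs" using d_def by simp
    then have "d^q \<le> (r - xs)^q" using d0 by (intro power_mono) auto
    have "a1 * d^q / real (q+1) = d^q * (a1 / real (q+1))" by simp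
    also have "\<dots> \<le> (r - xs)^q * (a1 + a2 r * (r - xs))"
      using \<open>d^q \<le> (r - xs)^q\<close> coef[OF rI(1)] d0 a1 \<open>d \<le> r - xs\<close> by (intro mult_mono) auto
    finally show ?thesis using yz[OF rI(1)] by simp
  qed
  have bot: "y (-r) - ys \<le> - (a1 * d^q / real (q+1))"
  proof -
    have "-r - xs \<le> -d" using d_def by simp
    then have "(-r - xs)^q \<le> (-d)^q" using oddq by (intro power_mono_odd) auto
    also have "(-d)^q = - (d^q)" using oddq by simp
    finally have p: "(-r - xs)^q \<le> - (d^q)" .
    have "(-r - xs)^q * (a1 + a2 (-r) * (-r - xs)) \<le> (-(d^q)) * (a1 / real (q+1))"
    proof -
      have "(-r - xs)^q * (a1 + a2 (-r) * (-r - xs)) \<le> (-r - xs)^q * (a1 / real (q+1))"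
      proof (rule mult_left_mono_neg)
        show "(-r - xs)^q \<le> 0" using p zero_le_power[OF d0, of q] by linarith
      qed (rule coef[OF rI(2)])
      also have "\<dots> \<le> (-(d^q)) * (a1 / real (q+1))"
        using p a1 by (intro mult_right_mono) auto
      finally show ?thesis .
    qed
    then show ?thesis using yz[OF rI(2)] by (simp add: mult.commute)
  qed
  have part2: "{v. \<bar>v - ys\<bar> \<le> a1 * (r - \<bar>xs\<bar>)^(2*n+1) / real (2*n+2)} \<subseteq> y ` I"
  proof
    fix v assume "v \<in> {v. \<bar>v - ys\<bar> \<le> a1 * (r - \<bar>xs\<bar>)^(2*n+1) / real (2*n+2)}"
    then have v: "\<bar>v - ys\<bar> \<le> a1 * d^q / real (q+1)" by (simp add: d_def q_def qp)
    have "y (-r) \<le> v" "v \<le> y r" using v top bot by linarith+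
    moreover have "continuous_on {-r..r} y" using contY by (simp add: I_def)
    ultimately obtain z where "z \<ge> -r" "z \<le> r" "y z = v"
      using IVT'[of y "-r" v r] r by auto
    then show "v \<in> y ` I" by (auto simp: I_def)
  qed
  show ?thesis using part1 part2 by (simp add: q_def)
qed

end
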